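(* For every integer $n\ge3$ there exists an irreducible $\lambda$-quiddity of size $n$ over the ring $\mathbb{Z}\times\mathbb{Z}$.
   Context: For $a_1,\ldots,a_n$ in a commutative unital ring $A$, $M_n(a_1,\ldots,a_n)=\begin{pmatrix}a_n&-1\\1&0\end{pmatrix}\cdots\begin{pmatrix}a_1&-1\\1&0\end{pmatrix}$. An $n$-tuple $(a_1,\ldots,a_n)\in A^n$ is a $\lambda$-quiddity over $A$ (of size $n$) if $M_n(a_1,\ldots,a_n)=\pm\mathrm{Id}$. For $(a_1,\ldots,a_n)\in A^n$, $(b_1,\ldots,b_m)\in A^m$, define $(a_1,\ldots,a_n)\oplus(b_1,\ldots,b_m)=(a_1+b_m,a_2,\ldots,a_{n-1},a_n+b_1,b_2,\ldots,b_{m-1})$. Write $(a_1,\ldots,a_n)\sim(b_1,\ldots,b_n)$ if $(b_1,\ldots,b_n)$ is obtained from $(a_1,\ldots,a_n)$ or from $(a_n,\ldots,a_1)$ by a cyclic permutation. A $\lambda$-quiddity $(c_1,\ldots,c_n)$ with $n\ge3$ is reducible if there exist a $\lambda$-quiddity $(b_1,\ldots,b_l)$ and a tuple $(a_1,\ldots,a_m)$ with $l,m\ge3$ and $(c_1,\ldots,c_n)\sim(a_1,\ldots,a_m)\oplus(b_1,\ldots,b_l)$; it is irreducible otherwise. *)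

theory Defs
  imports Main "HOL-Library.Product_Plus"
begin

instantiation prod :: (times, times) times
begin
definition times_prod_def: "x * y = (fst x * fst y, snd x * snd y)"
instance ..
end

instantiation prod :: (one, one) one
begin
definition one_prod_def: "1 = (1, 1)"
instance ..
end

instance prod :: (comm_ring_1, comm_ring_1) comm_ring_1
  by standard (auto simp: times_prod_def one_prod_def zero_prod_def plus_prod_def
      minus_prod_def algebra_simps prod_eq_iff)

section \<open>2x2 matrices, written row-major as (a, b, c, d) for [[a, b], [c, d]]\<close>

type_synonym 'a mat2 = "'a \<times> 'a \<times> 'a \<times> 'a"

fun mat2_mult :: "'a::comm_ring_1 mat2 \<Rightarrow> 'a mat2 \<Rightarrow> 'a mat2" where
  "mat2_mult (a, b, c, d) (e, f, g, h) = (a*e + b*g, a*f + b*h, c*e + d*g, c*f + d*h)"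

definition mat2_id :: "'a::comm_ring_1 mat2" where
  "mat2_id = (1, 0, 0, 1)"

definition mat2_neg_id :: "'a::comm_ring_1 mat2" where
  "mat2_neg_id = (-1, 0, 0, -1)"

definition Mq1 :: "'a::comm_ring_1 \<Rightarrow> 'a mat2" where
  "Mq1 a = (a, -1, 1, 0)"

text \<open>M_n(a_1,...,a_n) = M(a_n) ... M(a_1), for the list [a_1,...,a_n].\<close>
fun Mq :: "'a::comm_ring_1 list \<Rightarrow> 'a mat2" where
  "Mq [] = mat2_id"
| "Mq (a # as) = mat2_mult (Mq as) (Mq1 a)"

definition lambda_quiddity :: "'a::comm_ring_1 list \<Rightarrow> bool" where
  "lambda_quiddity c \<longleftrightarrow> Mq c = mat2_id \<or> Mq c = mat2_neg_id"

text \<open>(a_1..a_m) (+) (b_1..b_l) = (a_1+b_l, a_2..a_{m-1}, a_m+b_1, b_2..b_{l-1}).\<close>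
definition qsum :: "'a::comm_ring_1 list \<Rightarrow> 'a list \<Rightarrow> 'a list" where
  "qsum a b = (hd a + last b) # take (length a - 2) (tl a) @ [last a + hd b] @ butlast (tl b)"

definition qequiv :: "'a list \<Rightarrow> 'a list \<Rightarrow> bool" where
  "qequiv c d \<longleftrightarrow> (\<exists>k. d = rotate k c \<or> d = rotate k (rev c))"

definition reducible_quiddity :: "'a::comm_ring_1 list \<Rightarrow> bool" where
  "reducible_quiddity c \<longleftrightarrow> length c \<ge> 3 \<and> lambda_quiddity c \<and>
     (\<exists>a b. length a \<ge> 3 \<and> length b \<ge> 3 \<and> lambda_quiddity b \<and> qequiv c (qsum a b))"

definition irreducible_quiddity :: "'a::comm_ring_1 list \<Rightarrow> bool" where
  "irreducible_quiddity c \<longleftrightarrow> length c \<ge> 3 \<and> lambda_quiddity c \<and> \<not> reducible_quiddity c"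

end

theory Submission
  imports Defs
begin

lemma mat2_mult_assoc: "mat2_mult (mat2_mult A B) C = mat2_mult A (mat2_mult B C)"
  by (cases A; cases B; cases C) (simp add: algebra_simps)

lemma mat2_mult_id: "mat2_mult A mat2_id = A"
  by (cases A) (simp add: mat2_id_def)

lemma mat2_id_mult: "mat2_mult mat2_id A = A"
  by (cases A) (simp add: mat2_id_def)

lemma Mq_append: "Mq (xs @ ys) = mat2_mult (Mq ys) (Mq xs)"
  by (induction xs) (simp_all add: mat2_mult_id mat2_mult_assoc)

lemma Mq_snoc: "Mq (xs @ [y]) = mat2_mult (Mq1 y) (Mq xs)"
  by (simp add: Mq_append mat2_mult_id mat2_id_mult)

lemma Mq_rev: "Mq (rev w) = (case Mq w of (a,b,c,d) \<Rightarrow> (a,-c,-b,d))"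
proof (induction w)
  case Nil then show ?case by (simp add: mat2_id_def)
next
  case (Cons x w)
  obtain a b c d where e: "Mq w = (a,b,c,d)" by (cases "Mq w") auto
  show ?case using Cons e by (simp add: Mq_snoc Mq1_def algebra_simps)
qed

lemma Mq_rev_fst: "fst (Mq (rev w)) = fst (Mq w)"
  by (simp add: Mq_rev split: prod.splits)

definition mfst :: "('a \<times> 'b) mat2 \<Rightarrow> 'a mat2" where
  "mfst M = (case M of (a,b,c,d) \<Rightarrow> (fst a, fst b, fst c, fst d))"
definition msnd :: "('a \<times> 'b) mat2 \<Rightarrow> 'b mat2" where
  "msnd M = (case M of (a,b,c,d) \<Rightarrow> (snd a, snd b, snd c, snd d))"

lemma mfst_Mq: "mfst (Mq (xs :: ('a::comm_ring_1 \<times> 'b::comm_ring_1) list)) = Mq (map fst xs)"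
proof (induction xs)
  case Nil then show ?case by (simp add: mfst_def mat2_id_def one_prod_def)
next
  case (Cons x xs)
  obtain a b c d where e: "Mq xs = (a,b,c,d)" by (cases "Mq xs") auto
  have h: "Mq (map fst xs) = (fst a, fst b, fst c, fst d)" using Cons.IH e by (simp add: mfst_def)
  show ?case using h e by (simp add: mfst_def Mq1_def times_prod_def one_prod_def)
qed

lemma msnd_Mq: "msnd (Mq (xs :: ('a::comm_ring_1 \<times> 'b::comm_ring_1) list)) = Mq (map snd xs)"
proof (induction xs)
  case Nil then show ?case by (simp add: msnd_def mat2_id_def one_prod_def)
next
  case (Cons x xs)
  obtain a b c d where e: "Mq xs = (a,b,c,d)" by (cases "Mq xs") auto
  have h: "Mq (map snd xs) = (snd a, snd b, snd c, snd d)" using Cons.IH e by (simp add: msnd_def)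
  show ?case using h e by (simp add: msnd_def Mq1_def times_prod_def one_prod_def)
qed

lemma Mq_rep2: "Mq (replicate a (2::int)) = (int a + 1, - int a, int a, 1 - int a)"
  by (induction a) (simp_all add: mat2_id_def Mq1_def algebra_simps)

lemma Mq_neg_lift:
  fixes xs :: "(int \<times> int) list"
  assumes "Mq (map fst xs) = mat2_neg_id" "Mq (map snd xs) = mat2_neg_id"
  shows "Mq xs = mat2_neg_id"
proof -
  obtain a b c d where e: "Mq xs = (a,b,c,d)" by (cases "Mq xs") auto
  have 1: "(fst a, fst b, fst c, fst d) = (-1,0,0,-1)"
    using mfst_Mq[of xs] assms e by (simp add: mfst_def mat2_neg_id_def)
  have 2: "(snd a, snd b, snd c, snd d) = (-1,0,0,-1)"
    using msnd_Mq[of xs] assms e by (simp add: msnd_def mat2_neg_id_def)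
  show ?thesis using 1 2 e by (simp add: mat2_neg_id_def prod_eq_iff one_prod_def)
qed

lemma sandwich: "Mq (x # w @ [y]) = (e1,e2,e3,e4) \<Longrightarrow> e4 = - fst (Mq w)"
  by (cases "Mq w") (auto simp: Mq_snoc Mq1_def)


lemma rot_lt: "k < length L \<Longrightarrow> rotate k L = drop k L @ take k L"
  by (simp add: rotate_drop_take)

lemma tk1: "take (1+t) ([a] @ ys) = [a] @ take t ys" by simp
lemma tk2: "take (2+t) ([a,b] @ ys) = [a,b] @ take t ys" by (simp add: numeral_2_eq_2)
lemma tk3: "take (3+t) ([a,b,c] @ ys) = [a,b,c] @ take t ys" by (simp add: numeral_3_eq_3)
lemma dt4: "drop (4+i) ([a,b,c,d] @ ys) = drop i ys" by (simp add: numeral_eq_Suc)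
lemma tt4: "take (4+i) ([a,b,c,d] @ ys) = [a,b,c,d] @ take i ys" by (simp add: numeral_eq_Suc)

lemma windows:
  assumes L: "L = [a1,a2,a3,a4] @ replicate m z" and k: "k < m+4" and j: "1 \<le> j" "j \<le> m+1"
  and H1: "\<And>j. 1 \<le> j \<Longrightarrow> j \<le> m+1 \<Longrightarrow> P (replicate j z)"
  and H2: "\<And>s. s \<le> m \<Longrightarrow> P (replicate s z @ [a1])"
  and H3: "\<And>s. s+2 \<le> m+1 \<Longrightarrow> P (replicate s z @ [a1,a2])"
  and H4: "\<And>s. s+3 \<le> m+1 \<Longrightarrow> P (replicate s z @ [a1,a2,a3])"
  and H5: "\<And>s t. s+t+4 \<le> m+1 \<Longrightarrow> P (replicate s z @ [a1,a2,a3,a4] @ replicate t z)"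
  and H6a: "P [a2]" and H6b: "2 \<le> m+1 \<Longrightarrow> P [a2,a3]"
  and H6c: "\<And>t. t+3 \<le> m+1 \<Longrightarrow> P ([a2,a3,a4] @ replicate t z)"
  and H7a: "P [a3]" and H7b: "\<And>t. t+2 \<le> m+1 \<Longrightarrow> P ([a3,a4] @ replicate t z)"
  and H8: "\<And>t. t+1 \<le> m+1 \<Longrightarrow> P ([a4] @ replicate t z)"
  shows "P (take j (rotate k L))"
proof -
  have len: "length L = m + 4" using L by simp
  have R: "rotate k L = drop k L @ take k L" using k len by (simp add: rot_lt)
  have "k = 0 \<or> k = 1 \<or> k = 2 \<or> k = 3 \<or> (\<exists>i. k = 4 + i \<and> i < m)" using k by presburger
  moreover
  { assume k0: "k = 0"
    obtain t where t: "j = 1 + t" using j(1) by (metis le_add_diff_inverse)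
    have "t = 0 \<or> t = 1 \<or> t = 2 \<or> (\<exists>u. t = 3 + u)" by presburger
    moreover
    { assume "t = 0"
      then have "take j (rotate k L) = replicate 0 z @ [a1]" using k0 t L by simp
      then have ?thesis using H2[of 0] by simp }
    moreover
    { assume "t = 1"
      then have "take j (rotate k L) = replicate 0 z @ [a1,a2]" using k0 t L by (simp add: numeral_2_eq_2)
      then have ?thesis using H3[of 0] j t \<open>t = 1\<close> by simp }
    moreover
    { assume "t = 2"
      then have "take j (rotate k L) = replicate 0 z @ [a1,a2,a3]" using k0 t L by (simp add: numeral_3_eq_3)
      then have ?thesis using H4[of 0] j t \<open>t = 2\<close> by simp }
    moreover
    { fix u assume u: "t = 3 + u"
      have "j = 4 + u" using t u by simp
      then have "take j (rotate k L) = [a1,a2,a3,a4] @ take u (replicate m z)"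
        using k0 L by (simp only: rotate0 id_apply tt4)
      also have "\<dots> = replicate 0 z @ [a1,a2,a3,a4] @ replicate u z" using j t u by simp
      finally have ?thesis using H5[of 0 u] j t u by simp }
    ultimately have ?thesis by blast }
  moreover
  { assume k1: "k = 1"
    have e: "rotate k L = [a2,a3,a4] @ (replicate m z @ [a1])" using R L k1 by simp
    obtain t where t: "j = 1 + t" using j(1) by (metis le_add_diff_inverse)
    have "t = 0 \<or> t = 1 \<or> (\<exists>u. t = 2 + u)" by presburger
    moreover
    { assume "t = 0"
      then have "take j (rotate k L) = [a2]" using e t by simp
      then have ?thesis using H6a by simp }
    moreover
    { assume "t = 1"
      then have "take j (rotate k L) = [a2,a3]" using e t by (simp add: numeral_2_eq_2)
      then have ?thesis using H6b j t \<open>t = 1\<close> by simp }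
    moreover
    { fix u assume u: "t = 2 + u"
      have "j = 3 + u" using t u by simp
      then have "take j (rotate k L) = [a2,a3,a4] @ take u (replicate m z @ [a1])"
        using e by (simp only: tk3)
      also have "\<dots> = [a2,a3,a4] @ replicate u z" using j t u by simp
      finally have ?thesis using H6c[of u] j t u by simp }
    ultimately have ?thesis by blast }
  moreover
  { assume k2: "k = 2"
    have e: "rotate k L = [a3,a4] @ (replicate m z @ [a1,a2])" using R L k2 by (simp add: numeral_2_eq_2)
    obtain t where t: "j = 1 + t" using j(1) by (metis le_add_diff_inverse)
    have "t = 0 \<or> (\<exists>u. t = 1 + u)" by presburger
    moreover
    { assume "t = 0"
      then have "take j (rotate k L) = [a3]" using e t by simp
      then have ?thesis using H7a by simp }
    moreover
    { fix u assume u: "t = 1 + u"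
      have "j = 2 + u" using t u by simp
      then have "take j (rotate k L) = [a3,a4] @ take u (replicate m z @ [a1,a2])"
        using e by (simp only: tk2)
      also have "\<dots> = [a3,a4] @ replicate u z" using j t u by simp
      finally have ?thesis using H7b[of u] j t u by simp }
    ultimately have ?thesis by blast }
  moreover
  { assume k3: "k = 3"
    have e: "rotate k L = [a4] @ (replicate m z @ [a1,a2,a3])" using R L k3 by (simp add: numeral_3_eq_3)
    obtain t where t: "j = 1 + t" using j(1) by (metis le_add_diff_inverse)
    then have "take j (rotate k L) = [a4] @ take t (replicate m z @ [a1,a2,a3])"
      using e by (simp only: tk1)
    also have "\<dots> = [a4] @ replicate t z" using j t by simp
    finally have ?thesis using H8[of t] j t by simp }
  moreover
  { fix i assume k4: "k = 4 + i" "i < m"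
    have d1: "drop k L = replicate (m - i) z" unfolding L k4(1) dt4 by simp
    have d2: "take k L = [a1,a2,a3,a4] @ replicate i z" unfolding L k4(1) tt4 using k4 by simp
    have e: "rotate k L = replicate (m - i) z @ ([a1,a2,a3,a4] @ replicate i z)" using R d1 d2 by simp
    have ?thesis
    proof (cases "j \<le> m - i")
      case True
      then have "take j (rotate k L) = replicate j z" using e by simp
      then show ?thesis using H1 j by simp
    next
      case False
      then obtain r where r: "j = (m - i) + r" "1 \<le> r"
        by (metis add_diff_inverse_nat less_one not_le add.commute zero_less_diff le_add_diff_inverse2 nat_le_linear)
      have e2: "take j (rotate k L) = replicate (m - i) z @ take r ([a1,a2,a3,a4] @ replicate i z)"
        using e r by simp
      obtain t where t: "r = 1 + t" using r(2) by (metis le_add_diff_inverse)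
      have "t = 0 \<or> t = 1 \<or> t = 2 \<or> (\<exists>u. t = 3 + u)" by presburger
      moreover
      { assume "t = 0"
        then have "take j (rotate k L) = replicate (m - i) z @ [a1]" using e2 t by simp
        then have ?thesis using H2[of "m - i"] by simp }
      moreover
      { assume "t = 1"
        then have "take j (rotate k L) = replicate (m - i) z @ [a1,a2]" using e2 t by (simp add: numeral_2_eq_2)
        then have ?thesis using H3[of "m - i"] j r t \<open>t = 1\<close> by simp }
      moreover
      { assume "t = 2"
        then have "take j (rotate k L) = replicate (m - i) z @ [a1,a2,a3]" using e2 t by (simp add: numeral_3_eq_3)
        then have ?thesis using H4[of "m - i"] j r t \<open>t = 2\<close> by simp }
      moreover
      { fix u assume u: "t = 3 + u"
        have "r = 4 + u" using t u by simp
        then have "take j (rotate k L) = replicate (m - i) z @ ([a1,a2,a3,a4] @ take u (replicate i z))"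
          using e2 by (simp only: tt4)
        also have "\<dots> = replicate (m - i) z @ [a1,a2,a3,a4] @ replicate u z" using j r t u by simp
        finally have ?thesis using H5[of "m - i" u] j r t u by simp }
      ultimately show ?thesis by blast
    qed }
  ultimately show ?thesis by blast
qed


lemma c_windows:
  fixes m :: nat and A :: int and c :: "(int \<times> int) list"
  assumes A: "A = int m + 2"
  assumes c: "c = [(2,1),(1,A),(A,1),(1,2)] @ replicate m (2,2)"
  assumes k: "k < m+4" and j: "1 \<le> j" "j \<le> m+1"
  shows "2 \<le> fst (Mq (map fst (take j (rotate k c)))) \<or> 2 \<le> fst (Mq (map snd (take j (rotate k c))))"
proof (rule windows[OF c k j, where P = "\<lambda>w. 2 \<le> fst (Mq (map fst w)) \<or> 2 \<le> fst (Mq (map snd w))"])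
  fix j :: nat assume "1 \<le> j" "j \<le> m+1"
  then show "2 \<le> fst (Mq (map fst (replicate j (2::int,2::int)))) \<or> 2 \<le> fst (Mq (map snd (replicate j (2::int,2::int))))"
    by (simp add: Mq_rep2)
next
  fix s :: nat assume "s \<le> m"
  then show "2 \<le> fst (Mq (map fst (replicate s (2::int,2::int) @ [(2,1)]))) \<or> 2 \<le> fst (Mq (map snd (replicate s (2::int,2::int) @ [(2,1)])))"
    by (simp add: Mq_append Mq_rep2 Mq1_def mat2_id_def algebra_simps)
next
  fix s :: nat assume "s + 2 \<le> m+1"
  then show "2 \<le> fst (Mq (map fst (replicate s (2::int,2::int) @ [(2,1),(1,A)]))) \<or> 2 \<le> fst (Mq (map snd (replicate s (2::int,2::int) @ [(2,1),(1,A)])))"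
    by (simp add: Mq_append Mq_rep2 Mq1_def mat2_id_def A algebra_simps)
next
  fix s :: nat assume "s + 3 \<le> m+1"
  then show "2 \<le> fst (Mq (map fst (replicate s (2::int,2::int) @ [(2,1),(1,A),(A,1)]))) \<or> 2 \<le> fst (Mq (map snd (replicate s (2::int,2::int) @ [(2,1),(1,A),(A,1)])))"
    by (simp add: Mq_append Mq_rep2 Mq1_def mat2_id_def A algebra_simps)
next
  fix s t :: nat assume "s + t + 4 \<le> m+1"
  then show "2 \<le> fst (Mq (map fst (replicate s (2::int,2::int) @ [(2,1),(1,A),(A,1),(1,2)] @ replicate t (2,2)))) \<or> 2 \<le> fst (Mq (map snd (replicate s (2::int,2::int) @ [(2,1),(1,A),(A,1),(1,2)] @ replicate t (2,2))))"
    by (simp add: Mq_append Mq_rep2 Mq1_def mat2_id_def A algebra_simps)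
next
  show "2 \<le> fst (Mq (map fst [(1::int,A)])) \<or> 2 \<le> fst (Mq (map snd [(1::int,A)]))"
    by (simp add: Mq1_def mat2_id_def A)
next
  assume "2 \<le> m+1"
  then show "2 \<le> fst (Mq (map fst [(1::int,A),(A,1)])) \<or> 2 \<le> fst (Mq (map snd [(1::int,A),(A,1)]))"
    by (simp add: Mq1_def mat2_id_def A)
next
  fix t :: nat assume "t + 3 \<le> m+1"
  then show "2 \<le> fst (Mq (map fst ([(1::int,A),(A,1),(1,2)] @ replicate t (2,2)))) \<or> 2 \<le> fst (Mq (map snd ([(1::int,A),(A,1),(1,2)] @ replicate t (2,2))))"
    by (simp add: Mq_append Mq_rep2 Mq1_def mat2_id_def A algebra_simps)
next
  show "2 \<le> fst (Mq (map fst [(A,1::int)])) \<or> 2 \<le> fst (Mq (map snd [(A,1::int)]))"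
    by (simp add: Mq1_def mat2_id_def A)
next
  fix t :: nat assume "t + 2 \<le> m+1"
  then show "2 \<le> fst (Mq (map fst ([(A,1::int),(1,2)] @ replicate t (2,2)))) \<or> 2 \<le> fst (Mq (map snd ([(A,1::int),(1,2)] @ replicate t (2,2))))"
    by (simp add: Mq_append Mq_rep2 Mq1_def mat2_id_def A algebra_simps)
next
  fix t :: nat assume "t + 1 \<le> m+1"
  then show "2 \<le> fst (Mq (map fst ([(1::int,2::int)] @ replicate t (2,2)))) \<or> 2 \<le> fst (Mq (map snd ([(1::int,2::int)] @ replicate t (2,2))))"
    by (simp add: Mq_append Mq_rep2 Mq1_def mat2_id_def A algebra_simps)
qed


lemma dropwin: "i \<le> length Y \<Longrightarrow> drop i Y = take (length Y - i) (rotate i Y)"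
proof (cases "i = length Y")
  case True then show ?thesis by simp
next
  case False
  assume "i \<le> length Y"
  then have "i < length Y" using False by simp
  then show ?thesis by (simp add: rot_lt)
qed

lemma qsum_len: "length a \<ge> 3 \<Longrightarrow> length b \<ge> 3 \<Longrightarrow> length (qsum a b) = length a + length b - 2"
  by (simp add: qsum_def)

lemma qsum_drop: "length a \<ge> 3 \<Longrightarrow> drop (length a) (qsum a b) = butlast (tl b)"
proof -
  assume "length a \<ge> 3"
  then have "\<exists>x y z r. a = x#y#z#r" by (auto simp: numeral_3_eq_3 Suc_le_length_iff)
  then obtain x y z r where "a = x#y#z#r" by blast
  then show ?thesis by (simp add: qsum_def)
qed

lemma red_window:
  fixes c :: "(int \<times> int) list"
  assumes "reducible_quiddity c"
  shows "\<exists>k j w. k < length c \<and> 1 \<le> j \<and> j + 3 \<le> length c \<and>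
     (w = take j (rotate k c) \<or> rev w = take j (rotate k c)) \<and> (fst (Mq w) = 1 \<or> fst (Mq w) = -1)"
proof -
  obtain a b where la: "length a \<ge> 3" and lb: "length b \<ge> 3" and qb: "lambda_quiddity b"
    and eq: "qequiv c (qsum a b)"
    using assms unfolding reducible_quiddity_def by blast
  define d where "d = qsum a b"
  define w where "w = butlast (tl b)"
  define n where "n = length c"
  define j where "j = length b - 2"
  obtain k where dk: "d = rotate k c \<or> d = rotate k (rev c)" using eq unfolding qequiv_def d_def by blast
  have ln: "length d = n" using dk by (auto simp: n_def)
  have ld: "length d = length a + length b - 2" using qsum_len[OF la lb] d_def by simp
  have dw: "drop (length a) d = w" using qsum_drop[OF la] d_def w_def by simp
  have lw: "length w = j" using w_def j_def by simp
  have bw: "b = hd b # w @ [last b]"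
  proof -
    have b1: "b = hd b # tl b" using lb by (cases b) auto
    have "tl b \<noteq> []" using lb by (cases b) auto
    then have "tl b = butlast (tl b) @ [last (tl b)]" by simp
    moreover have "last (tl b) = last b" using lb by (cases b) auto
    ultimately show ?thesis using b1 w_def by metis
  qed
  have fw: "fst (Mq w) = 1 \<or> fst (Mq w) = -1"
  proof -
    obtain e1 e2 e3 e4 where e: "Mq b = (e1,e2,e3,e4)" by (cases "Mq b") auto
    have e': "Mq (hd b # w @ [last b]) = (e1,e2,e3,e4)" using e bw by metis
    have "e4 = - fst (Mq w)" by (rule sandwich[OF e'])
    moreover have "e4 = 1 \<or> e4 = -1" using qb e by (auto simp: lambda_quiddity_def mat2_id_def mat2_neg_id_def)
    ultimately show ?thesis by (metis minus_minus)
  qed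
  have npos: "n > 0" using ln ld la lb by simp
  have j1: "1 \<le> j" "j + 3 \<le> n" using j_def ln ld la lb by auto
  have wd: "w = take j (rotate (length a) d)"
    using dropwin[of "length a" d] dw ln ld lw la lb by simp
  show ?thesis
  proof (cases "d = rotate k c")
    case True
    have "rotate (length a) d = rotate (length a + k) c" by (simp add: True rotate_rotate)
    also have "\<dots> = rotate ((length a + k) mod length c) c" by (rule rotate_conv_mod)
    finally have "w = take j (rotate ((length a + k) mod n) c)" using wd by (simp add: n_def)
    moreover have "(length a + k) mod n < length c" using npos n_def by simp
    ultimately show ?thesis using j1 fw n_def
      by (intro exI[of _ "(length a + k) mod n"] exI[of _ j] exI[of _ w]) simp
  next
    case False
    then have d2: "d = rotate k (rev c)" using dk by simp
    define r where "r = (length a + k) mod n"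
    have "w = take j (rotate r (rev c))"
    proof -
      have "rotate (length a) d = rotate (length a + k) (rev c)" by (simp add: d2 rotate_rotate)
      also have "\<dots> = rotate ((length a + k) mod length (rev c)) (rev c)" by (rule rotate_conv_mod)
      finally show ?thesis using wd by (simp add: r_def n_def)
    qed
    also have "\<dots> = take j (rev (rotate (n - r) c))"
      using npos by (simp add: rotate_rev n_def r_def)
    also have "\<dots> = rev (drop (n - j) (rotate (n - r) c))"
      using j1 by (simp add: rev_drop n_def)
    finally have "rev w = drop (n - j) (rotate (n - r) c)" by simp
    also have "\<dots> = take j (rotate (n - j) (rotate (n - r) c))"
      using dropwin[of "n - j" "rotate (n - r) c"] j1 by (simp add: n_def)
    also have "\<dots> = take j (rotate (n - j + (n - r)) c)" by (simp add: rotate_rotate)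
    also have "\<dots> = take j (rotate ((n - j + (n - r)) mod length c) c)" by (simp only: rotate_conv_mod[symmetric])
    finally have "rev w = take j (rotate ((n - j + (n - r)) mod n) c)" by (simp add: n_def)
    moreover have "(n - j + (n - r)) mod n < length c" using npos n_def by simp
    ultimately show ?thesis using j1 fw n_def
      by (intro exI[of _ "(n - j + (n - r)) mod n"] exI[of _ j] exI[of _ w]) simp
  qed
qed


lemma T_bounds:
  fixes w :: "(int \<times> int) list"
  assumes "fst (Mq w) = 1 \<or> fst (Mq w) = -1"
  shows "fst (Mq (map fst w)) \<le> 1 \<and> fst (Mq (map snd w)) \<le> 1"
proof -
  obtain a b c d where e: "Mq w = (a,b,c,d)" by (cases "Mq w") auto
  have 1: "Mq (map fst w) = (fst a, fst b, fst c, fst d)" using mfst_Mq[of w] e by (simp add: mfst_def)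
  have 2: "Mq (map snd w) = (snd a, snd b, snd c, snd d)" using msnd_Mq[of w] e by (simp add: msnd_def)
  show ?thesis using assms e 1 2 by (auto simp: one_prod_def)
qed

theorem corollary2p9:
  fixes n :: nat
  assumes "n \<ge> 3"
  shows "\<exists>c :: (int \<times> int) list. length c = n \<and> irreducible_quiddity c"
proof (cases "n = 3")
  case True
  define c :: "(int \<times> int) list" where "c = [(1,1),(1,1),(1,1)]"
  have lq: "lambda_quiddity c"
    unfolding lambda_quiddity_def
    by (rule disjI2, rule Mq_neg_lift) (simp_all add: c_def Mq1_def mat2_id_def mat2_neg_id_def)
  have "\<not> reducible_quiddity c"
  proof
    assume "reducible_quiddity c"
    then obtain a b where la: "length a \<ge> 3" and lb: "length b \<ge> 3" and eq: "qequiv c (qsum a b)"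
      unfolding reducible_quiddity_def by blast
    then have "length (qsum a b) = 3" by (auto simp: qequiv_def c_def)
    then show False using qsum_len[OF la lb] la lb by simp
  qed
  moreover have "length c = n" using True c_def by simp
  ultimately show ?thesis using lq assms unfolding irreducible_quiddity_def by blast
next
  case False
  define m where "m = n - 4"
  have nm: "n = m + 4" using False assms m_def by simp
  define A :: int where "A = int m + 2"
  define c :: "(int \<times> int) list" where "c = [(2,1),(1,A),(A,1),(1,2)] @ replicate m (2,2)"
  have len: "length c = n" using nm c_def by simp
  have lq: "lambda_quiddity c"
    unfolding lambda_quiddity_def
    by (rule disjI2, rule Mq_neg_lift)
      (simp_all add: c_def A_def Mq_append Mq_rep2 Mq1_def mat2_id_def mat2_neg_id_def algebra_simps)
  have "\<not> reducible_quiddity c"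
  proof
    assume "reducible_quiddity c"
    then obtain k j w where k: "k < length c" and j: "1 \<le> j" "j + 3 \<le> length c"
      and ww: "w = take j (rotate k c) \<or> rev w = take j (rotate k c)"
      and fw: "fst (Mq w) = 1 \<or> fst (Mq w) = -1"
      using red_window[OF \<open>reducible_quiddity c\<close>] by blast
    have W: "2 \<le> fst (Mq (map fst (take j (rotate k c)))) \<or> 2 \<le> fst (Mq (map snd (take j (rotate k c))))"
      using c_windows[OF A_def c_def] k j len nm by simp
    have B: "fst (Mq (map fst w)) \<le> 1 \<and> fst (Mq (map snd w)) \<le> 1" using T_bounds[OF fw] .
    from ww show False
    proof
      assume "w = take j (rotate k c)" then show False using W B by auto
    next
      assume "rev w = take j (rotate k c)"
      then have "take j (rotate k c) = rev w" by simp
      then show False using W B by (simp add: rev_map[symmetric] Mq_rev_fst)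
    qed
  qed
  then show ?thesis using lq len assms unfolding irreducible_quiddity_def by blast
qed

end
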